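(* Let a classification model have feature space $\Phi=[-a,a]^n$ ($a>0$) and $n$ classes, with logits $z=Wx+b$ for $x\in\Phi$, $W\in\mathbb{R}^{n\times n}$, $b\in\mathbb{R}^n$, and $\rho(W)=\min_{i\ne j}\|W[j]-W[i]\|_2>0$. Let $\tau\in(0,1)$ and $\delta=\frac{1}{\rho(W)}\log\big(\frac{\tau(1-n)}{\tau-1}\big)$. For $i\ne j$ let $$\Delta^{(i,j)\pm\delta}_\phi=\Big\{x\in\Phi:\ \frac{|(W[i]-W[j])x+b[i]-b[j]|}{\|W[i]-W[j]\|_2}\le\delta\Big\},\qquad \Gamma\Delta=\bigcup_{i=1}^{n-1}\bigcup_{j=i+1}^n\Delta^{(i,j)\pm\delta}_\phi.$$ Then the fraction of $\Phi$ classified with softmax score at least $\tau$ satisfies $$\mathcal{R}(\Phi(\ge\tau))\ \ge\ 1-\frac{1}{(2a)^n}\mathrm{vol}(\Gamma\Delta),$$ where $\Phi(\ge\tau)=\{x\in\Phi:\max\mathrm{softmax}(Wx+b)\ge\tau\}$, $\mathcal{R}(\Phi(\ge\tau))=\mathrm{vol}(\Phi(\ge\tau))/(2a)^n$, and $\mathrm{vol}$ is $n$-dimensional Lebesgue measure.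
   Context: $W[k]$ denotes the $k$-th row of $W$; $\mathrm{softmax}(z)[k]=e^{z[k]}/\sum_l e^{z[l]}$. *)

theory Defs
  imports "HOL-Analysis.Analysis"
begin

definition softmax :: "real ^ 'n \<Rightarrow> real ^ 'n" where
  "softmax z = (\<chi> k. exp (z $ k) / (\<Sum>l\<in>UNIV. exp (z $ l)))"

definition max_softmax :: "real ^ 'n \<Rightarrow> real" where
  "max_softmax z = Max (range (\<lambda>k. softmax z $ k))"

definition rho :: "real ^ 'n ^ 'n \<Rightarrow> real" where
  "rho W = Min {norm (W $ j - W $ i) | i j. i \<noteq> j}"

definition feature_cube :: "real \<Rightarrow> (real ^ 'n) set" where
  "feature_cube a = {x. \<forall>i. \<bar>x $ i\<bar> \<le> a}"

definition band :: "real \<Rightarrow> real ^ 'n ^ 'n \<Rightarrow> real ^ 'n \<Rightarrow> real \<Rightarrow> 'n \<Rightarrow> 'n \<Rightarrow> (real ^ 'n) set" where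
  "band a W b \<delta> i j = {x \<in> feature_cube a.
     \<bar>(W $ i - W $ j) \<bullet> x + b $ i - b $ j\<bar> / norm (W $ i - W $ j) \<le> \<delta>}"

text \<open>Gamma Delta: union of bands over all pairs i < j (equivalently i /= j, bands are symmetric).\<close>
definition Gamma_Delta :: "real \<Rightarrow> real ^ 'n ^ 'n \<Rightarrow> real ^ 'n \<Rightarrow> real \<Rightarrow> (real ^ 'n) set" where
  "Gamma_Delta a W b \<delta> = (\<Union>i. \<Union>j\<in>{j. j \<noteq> i}. band a W b \<delta> i j)"

definition confident_region :: "real \<Rightarrow> real ^ 'n ^ 'n \<Rightarrow> real ^ 'n \<Rightarrow> real \<Rightarrow> (real ^ 'n) set" where
  "confident_region a W b \<tau> = {x \<in> feature_cube a. max_softmax (W *v x + b) \<ge> \<tau>}"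

end

theory Submission
  imports Defs
begin

lemma cube_cbox: "feature_cube a = cbox (- (\<chi> i. a)) ((\<chi> i. a) :: real ^ 'n)"
  apply (auto simp: feature_cube_def mem_box_cart abs_le_iff)
   apply (metis minus_le_iff)+
  done

lemma sum_exp_pos: "(\<Sum>l\<in>(UNIV::'n::finite set). exp (f l :: real)) > 0"
  by (rule sum_pos) auto

lemma sum_exp_ne: "(\<Sum>l\<in>(UNIV::'n::finite set). exp (f l :: real)) \<noteq> 0"
  using sum_exp_pos[of f] by linarith

lemma cube_measure:
  assumes "a > 0"
  shows "measure lebesgue (feature_cube a :: (real ^ 'n) set) = (2 * a) ^ CARD('n)"
proof -
  have ne: "cbox (- (\<chi> i. a)) ((\<chi> i. a) :: real ^ 'n) \<noteq> {}"
  proof -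
    have "0 \<in> cbox (- (\<chi> i. a)) ((\<chi> i. a) :: real ^ 'n)"
      using assms by (auto simp: mem_box_cart)
    then show ?thesis by auto
  qed
  show ?thesis unfolding cube_cbox
    using content_cbox_cart[OF ne] by simp
qed

lemma closed_cube: "closed (feature_cube a :: (real ^ 'n) set)"
  unfolding cube_cbox by (rule closed_cbox)

lemma cont_logit: "continuous_on UNIV (\<lambda>x. ((W :: real ^ 'm ^ 'n) *v x + b) $ (l::'n::finite))"
  by (simp add: matrix_vector_mul_component) (intro continuous_intros)

lemma closed_band: "closed (band a W b d i j)"
proof -
  have "band a W b d i j = feature_cube a \<inter>
     {x. \<bar>(W $ i - W $ j) \<bullet> x + b $ i - b $ j\<bar> / norm (W $ i - W $ j) \<le> d}"
    by (auto simp: band_def)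
  moreover have "closed {x. \<bar>(W $ i - W $ j) \<bullet> x + b $ i - b $ j\<bar> / norm (W $ i - W $ j) \<le> d}"
    by (simp only: divide_inverse) (intro closed_Collect_le continuous_intros)
  ultimately show ?thesis using closed_cube by auto
qed

lemma closed_conf: "closed (confident_region a W b t)"
proof -
  have eq: "confident_region a W b t = feature_cube a \<inter>
     (\<Union>k. {x. t \<le> exp ((W *v x + b) $ k) / (\<Sum>l\<in>UNIV. exp ((W *v x + b) $ l))})"
    unfolding confident_region_def max_softmax_def softmax_def
    by (auto simp: Max_ge_iff)
  have ck: "closed {x. t \<le> exp ((W *v x + b) $ k) / (\<Sum>l\<in>UNIV. exp ((W *v x + b) $ l))}" for k
    by (intro closed_Collect_le continuous_intros cont_logit continuous_on_compose2[OF continuous_on_exp cont_logit])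
       (simp add: sum_exp_ne)
  show ?thesis unfolding eq
    by (intro closed_Int closed_cube closed_UN ck ballI) auto
qed


lemma closed_leb: "closed (S :: (real ^ 'n) set) \<Longrightarrow> S \<in> sets lebesgue"
  using borel_closed sets_completionI_sets sets_lborel by blast

lemma rho_le:
  assumes "j \<noteq> k"
  shows "rho W \<le> norm (W $ k - W $ (j::'n::finite))"
proof -
  have fin: "finite {norm (W $ j - W $ i) | i j. i \<noteq> j}"
    by (rule finite_subset[of _ "(\<lambda>(i,j). norm (W $ j - W $ i)) ` UNIV"]) auto
  show ?thesis unfolding rho_def
    by (rule Min_le[OF fin]) (use assms in auto)
qed

lemma pointwise:
  fixes W :: "real ^ 'n ^ 'n" and b :: "real ^ 'n"
  assumes n2: "CARD('n) \<ge> 2" and rho: "rho W > 0" and t0: "0 < \<tau>" and t1: "\<tau> < 1"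
    and xS: "x \<in> feature_cube a"
    and xG: "x \<notin> Gamma_Delta a W b ((1 / rho W) * ln (\<tau> * (1 - real CARD('n)) / (\<tau> - 1)))"
  shows "\<tau> \<le> max_softmax (W *v x + b)"
proof -
  define n where "n = CARD('n)"
  define z where "z = W *v x + b"
  define L where "L = ln (\<tau> * (1 - real n) / (\<tau> - 1))"
  define \<delta> where "\<delta> = (1 / rho W) * L"
  have argpos: "\<tau> * (1 - real n) / (\<tau> - 1) > 0"
    using n2 t0 t1 unfolding n_def by (intro divide_neg_neg mult_pos_neg) auto
  have expL: "exp (- L) = (1 - \<tau>) / (\<tau> * (real n - 1))"
    unfolding L_def using argpos n2 t0 t1 unfolding n_def
    by (simp add: exp_minus field_simps)
  have fr: "finite (range (\<lambda>j. z $ j))" by simp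
  have "Max (range (\<lambda>j. z $ j)) \<in> range (\<lambda>j. z $ j)"
    by (rule Max_in[OF fr]) simp
  then obtain k where k: "z $ k = Max (range (\<lambda>j. z $ j))"
    by (metis rangeE)
  have zk: "z $ j \<le> z $ k" for j using k Max_ge[OF fr] by auto
  have gap: "z $ k - z $ j \<ge> L" if jk: "j \<noteq> k" for j
  proof -
    have d: "(W $ k - W $ j) \<bullet> x + b $ k - b $ j = z $ k - z $ j"
      unfolding z_def by (simp add: matrix_vector_mul_component inner_diff_left)
    have nb: "x \<notin> band a W b \<delta> k j"
      using xG jk unfolding Gamma_Delta_def \<delta>_def L_def n_def by auto
    have "\<bar>z $ k - z $ j\<bar> / norm (W $ k - W $ j) > \<delta>"
      using nb xS d unfolding band_def by auto
    have gt: "z $ k - z $ j > \<delta> * norm (W $ k - W $ j)"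
    proof -
      have "norm (W $ k - W $ j) > 0" using rho_le[OF jk, of W] rho by linarith
      thus ?thesis using \<open>\<bar>z $ k - z $ j\<bar> / norm (W $ k - W $ j) > \<delta>\<close> zk[of j]
        by (simp add: less_divide_eq)
    qed
    show ?thesis
    proof (cases "\<delta> \<ge> 0")
      case True
      have "L = \<delta> * rho W" unfolding \<delta>_def using rho by simp
      also have "\<dots> \<le> \<delta> * norm (W $ k - W $ j)"
        using True rho_le[OF jk, of W] by (simp add: mult_left_mono)
      finally show ?thesis using gt by simp
    next
      case False
      hence "L < 0" unfolding \<delta>_def using rho
        by (simp add: zero_le_divide_iff)
      then show ?thesis using zk[of j] by simp
    qed
  qed
  have ej: "exp (z $ j) \<le> exp (z $ k) * ((1 - \<tau>) / (\<tau> * (real n - 1)))" if "j \<noteq> k" for j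
  proof -
    have "exp (z $ j) \<le> exp (z $ k + - L)" using gap[OF that] by simp
    also have "\<dots> = exp (z $ k) * exp (- L)" by (rule exp_add)
    finally show ?thesis using expL by simp
  qed
  define S where "S = (\<Sum>l\<in>UNIV. exp (z $ l))"
  have "S = exp (z $ k) + (\<Sum>l\<in>UNIV - {k}. exp (z $ l))"
    unfolding S_def by (rule sum.remove) auto
  also have "(\<Sum>l\<in>UNIV - {k}. exp (z $ l)) \<le> of_nat (card (UNIV - {k} :: 'n set)) * (exp (z $ k) * ((1 - \<tau>) / (\<tau> * (real n - 1))))"
    by (rule sum_bounded_above) (use ej in auto)
  also have "of_nat (card (UNIV - {k} :: 'n set)) = real n - 1"
    unfolding n_def using n2 by (simp add: card_Diff_singleton of_nat_diff)
  finally have "S \<le> exp (z $ k) + (real n - 1) * (exp (z $ k) * ((1 - \<tau>) / (\<tau> * (real n - 1))))"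
    by simp
  also have "\<dots> = exp (z $ k) / \<tau>"
    using n2 t0 unfolding n_def by (simp add: field_simps)
  finally have Sle: "S \<le> exp (z $ k) / \<tau>" .
  have Spos: "S > 0" unfolding S_def by (rule sum_exp_pos)
  have "\<tau> \<le> exp (z $ k) / S"
    using Sle Spos t0 by (simp add: field_simps)
  also have "\<dots> = softmax z $ k" unfolding softmax_def S_def by simp
  also have "\<dots> \<le> max_softmax z" unfolding max_softmax_def by (rule Max_ge) auto
  finally show ?thesis unfolding z_def .
qed

theorem theorem5:
  fixes a \<tau> :: real and W :: "real ^ 'n ^ 'n" and b :: "real ^ 'n"
  assumes "CARD('n) \<ge> 2"
    and "a > 0"
    and "rho W > 0"
    and "0 < \<tau>" and "\<tau> < 1"
  shows "measure lebesgue (confident_region a W b \<tau>) / (2 * a) ^ CARD('n)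
    \<ge> 1 - measure lebesgue (Gamma_Delta a W b
          ((1 / rho W) * ln (\<tau> * (1 - real CARD('n)) / (\<tau> - 1)))) / (2 * a) ^ CARD('n)"
proof -
  define G where "G = Gamma_Delta a W b ((1 / rho W) * ln (\<tau> * (1 - real CARD('n)) / (\<tau> - 1)))"
  define C where "C = confident_region a W b \<tau>"
  define P where "P = (2 * a) ^ CARD('n)"
  have P: "P > 0" unfolding P_def using assms by simp
  have eq: "feature_cube a = C \<union> G"
  proof -
    have "feature_cube a \<subseteq> C \<union> G"
      using pointwise[OF assms(1,3,4,5)] unfolding C_def G_def confident_region_def by blast
    moreover have "C \<subseteq> feature_cube a" unfolding C_def confident_region_def by auto
    moreover have "G \<subseteq> feature_cube a" unfolding G_def Gamma_Delta_def band_def by auto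
    ultimately show ?thesis by blast
  qed
  have cC: "closed C" unfolding C_def by (rule closed_conf)
  have cG: "closed G" unfolding G_def Gamma_Delta_def
    by (intro closed_UN ballI closed_band) auto
  have "P \<le> measure lebesgue C + measure lebesgue G"
    using measure_Un_le[OF closed_leb[OF cC] closed_leb[OF cG]] eq cube_measure[OF assms(2)]
    unfolding P_def by (metis)
  hence "(P - measure lebesgue G) / P \<le> measure lebesgue C / P"
    using P by (intro divide_right_mono) auto
  moreover have "(P - measure lebesgue G) / P = 1 - measure lebesgue G / P"
    using P by (simp add: diff_divide_distrib)
  ultimately have "measure lebesgue C / P \<ge> 1 - measure lebesgue G / P" by simp
  thus ?thesis unfolding C_def G_def P_def .
qed

end
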